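(* Let $n\ge 1$ and consider the transformation $(u_1,\ldots,u_n)\mapsto(x_1,\ldots,x_n)$ given by $$x_i=\frac{\sin u_i}{\cos u_{i+1}}\quad(1\le i\le n),$$ with indices taken cyclically so that $u_{n+1}:=u_1$, defined at points where all $\cos u_i\neq 0$. Then its Jacobian determinant is $$\frac{\partial(x_1,\ldots,x_n)}{\partial(u_1,\ldots,u_n)}=1\pm (x_1x_2\cdots x_n)^2,$$ where the sign is $-$ if $n$ is even and $+$ if $n$ is odd. *)

theory Defs
  imports "HOL-Analysis.Analysis" "HOL-Combinatorics.Permutations"
begin

text \<open>Coordinates are indexed 0..n-1 (paper: 1..n); cyclic successor of i is (i+1) mod n.
  The map (u_0,...,u_{n-1}) to (x_0,...,x_{n-1}), x_i = sin u_i / cos u_{i+1 mod n}.\<close>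
definition cyc_map :: "nat \<Rightarrow> (nat \<Rightarrow> real) \<Rightarrow> nat \<Rightarrow> real" where
  "cyc_map n u i = sin (u i) / cos (u (Suc i mod n))"

definition partial_deriv :: "((nat \<Rightarrow> real) \<Rightarrow> real) \<Rightarrow> (nat \<Rightarrow> real) \<Rightarrow> nat \<Rightarrow> real" where
  "partial_deriv f u j = deriv (\<lambda>t. f (u(j := t))) (u j)"

definition det_nat :: "nat \<Rightarrow> (nat \<Rightarrow> nat \<Rightarrow> real) \<Rightarrow> real" where
  "det_nat n A = (\<Sum>p\<in>{p. p permutes {..<n}}. of_int (sign p) * (\<Prod>i<n. A i (p i)))"

definition jacobian_det :: "nat \<Rightarrow> ((nat \<Rightarrow> real) \<Rightarrow> nat \<Rightarrow> real) \<Rightarrow> (nat \<Rightarrow> real) \<Rightarrow> real" where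
  "jacobian_det n F u = det_nat n (\<lambda>i j. partial_deriv (\<lambda>v. F v i) u j)"

end

theory Submission
  imports Defs
begin

definition sh :: "nat \<Rightarrow> nat \<Rightarrow> nat" where
  "sh n i = (if i < n then Suc i mod n else i)"

lemma sh_step:
  assumes "n \<ge> 1"
  shows "sh (Suc n) = sh n \<circ> Transposition.transpose (n - 1) n"
proof
  fix i
  show "sh (Suc n) i = (sh n \<circ> Transposition.transpose (n - 1) n) i"
    using assms by (cases "i < n - 1"; cases "i = n - 1"; cases "i = n")
      (auto simp: sh_def Transposition.transpose_def)
qed

lemma sh_perm_sign:
  assumes "n \<ge> 1"
  shows "sh n permutes {..<n} \<and> sign (sh n) = (-1) ^ (n - 1)"
  using assms
proof (induction n rule: dec_induct)
  case base
  have "sh 1 = id" by (auto simp: sh_def)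
  then show ?case using permutes_id sign_id by (metis diff_self_eq_0 power_0)
next
  case (step m)
  have p1: "sh m permutes {..<Suc m}"
    using step.IH permutes_subset by fastforce
  have p2: "Transposition.transpose (m - 1) m permutes {..<Suc m}"
    by (rule permutes_swap_id) auto
  have "sh (Suc m) permutes {..<Suc m}"
    unfolding sh_step[OF step.hyps(1)] by (rule permutes_compose[OF p2 p1])
  moreover have "sign (sh (Suc m)) = (-1) ^ (Suc m - 1)"
  proof -
    have "sign (sh (Suc m)) = sign (sh m) * sign (Transposition.transpose (m - 1) m)"
      unfolding sh_step[OF step.hyps(1)]
      by (rule sign_compose) (use p1 p2 permutes_imp_permutation in auto)
    also have "\<dots> = (-1) ^ (m - 1) * (-1)" using step.IH step.hyps(1)
      by (simp add: sign_swap_id)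
    also have "\<dots> = (-1) ^ (Suc m - 1)" using step.hyps(1)
      by (cases m) auto
    finally show ?thesis .
  qed
  ultimately show ?case by blast
qed

lemma perm_char:
  assumes n2: "n \<ge> 2" and p: "p permutes {..<n}"
    and h: "\<forall>i<n. p i = i \<or> p i = Suc i mod n"
  shows "p = id \<or> p = sh n"
proof (cases "\<forall>i<n. p i = i")
  case True
  then have "p = id" using p permutes_not_in by (metis eq_id_iff lessThan_iff)
  then show ?thesis by blast
next
  case False
  then obtain k where k: "k < n" "p k = Suc k mod n" using h by blast
  have ne: "Suc a mod n \<noteq> a" if "a < n" for a
  proof (cases "Suc a = n")
    case True
    then show ?thesis using n2 by simp
  next
    case False
    then show ?thesis using that by simp
  qed
  have claim: "p ((k + m) mod n) = Suc ((k + m) mod n) mod n" for m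
  proof (induction m)
    case 0
    then show ?case using k by simp
  next
    case (Suc m)
    define a where "a = (k + m) mod n"
    have an: "a < n" using n2 a_def by simp
    define b where "b = Suc a mod n"
    have bn: "b < n" using n2 b_def by simp
    have bk: "(k + Suc m) mod n = b" unfolding a_def b_def by (simp add: mod_Suc_eq)
    have pa: "p a = b" using Suc a_def b_def by simp
    have "p b \<noteq> b"
    proof
      assume "p b = b"
      then have "p a = p b" using pa by simp
      then have "a = b" using permutes_inj[OF p] by (meson injD)
      then show False using ne[OF an] b_def by simp
    qed
    then have "p b = Suc b mod n" using h bn by blast
    then show ?case using bk by simp
  qed
  have "p i = sh n i" for i
  proof (cases "i < n")
    case True
    have "(k + (i + n - k)) mod n = i" using True k by simp
    then show ?thesis using claim[of "i + n - k"] True by (simp add: sh_def)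
  next
    case False
    then show ?thesis using permutes_not_in[OF p] by (simp add: sh_def)
  qed
  then show ?thesis by blast
qed


lemma pd:
  assumes n2: "n \<ge> 2" and i: "i < n" and j: "j < n"
    and c: "\<forall>k<n. cos (u k) \<noteq> 0"
  shows "partial_deriv (\<lambda>v. cyc_map n v i) u j =
    (if j = i then cos (u i) / cos (u (sh n i))
     else if j = sh n i then sin (u i) * sin (u j) / (cos (u j))^2 else 0)"
proof -
  have ne: "Suc i mod n \<noteq> i"
  proof (cases "Suc i = n")
    case True
    then show ?thesis using n2 by simp
  next
    case False
    then show ?thesis using i by simp
  qed
  have shi: "sh n i = Suc i mod n" using i by (simp add: sh_def)
  show ?thesis
  proof (cases "j = i")
    case True
    have f: "(\<lambda>t. cyc_map n (u(j := t)) i) = (\<lambda>t. sin t / cos (u (Suc i mod n)))"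
      using True ne by (auto simp: cyc_map_def)
    have "((\<lambda>t. sin t / cos (u (Suc i mod n))) has_real_derivative cos (u j) / cos (u (Suc i mod n))) (at (u j))"
      using c n2 by (auto intro!: derivative_eq_intros)
    then show ?thesis unfolding partial_deriv_def f using True shi
      by (simp add: DERIV_imp_deriv)
  next
    case False
    show ?thesis
    proof (cases "j = sh n i")
      case True
      have f: "(\<lambda>t. cyc_map n (u(j := t)) i) = (\<lambda>t. sin (u i) / cos t)"
        using True False shi by (auto simp: cyc_map_def)
      have cj: "cos (u j) \<noteq> 0" using c j by blast
      have "((\<lambda>t. sin (u i) / cos t) has_real_derivative sin (u i) * sin (u j) / (cos (u j))^2) (at (u j))"
        using cj by (auto intro!: derivative_eq_intros simp: power2_eq_square field_simps)
      then show ?thesis unfolding partial_deriv_def f using True False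
        by (simp add: DERIV_imp_deriv)
    next
      case False2: False
      have f: "(\<lambda>t. cyc_map n (u(j := t)) i) = (\<lambda>t. cyc_map n u i)"
        using False False2 shi by (auto simp: cyc_map_def)
      show ?thesis unfolding partial_deriv_def f using False False2 by simp
    qed
  qed
qed

lemma pd1:
  assumes c: "cos (u 0) \<noteq> 0"
  shows "partial_deriv (\<lambda>v. cyc_map 1 v 0) u 0 = 1 + (cyc_map 1 u 0)^2"
proof -
  have f: "(\<lambda>t. cyc_map 1 (u(0 := t)) 0) = (\<lambda>t. sin t / cos t)"
    by (auto simp: cyc_map_def)
  have "((\<lambda>t. sin t / cos t) has_real_derivative 1 + (sin (u 0) / cos (u 0))^2) (at (u 0))"
    using c by (auto intro!: derivative_eq_intros simp: power2_eq_square field_simps)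
  then show ?thesis unfolding partial_deriv_def f
    by (simp add: DERIV_imp_deriv cyc_map_def)
qed

theorem lemma1:
  fixes n :: nat and u :: "nat \<Rightarrow> real"
  assumes "n \<ge> 1"
    and "\<forall>i<n. cos (u i) \<noteq> 0"
  shows "jacobian_det n (cyc_map n) u =
           (if even n then 1 - (\<Prod>i<n. cyc_map n u i)^2
                      else 1 + (\<Prod>i<n. cyc_map n u i)^2)"
proof (cases "n = 1")
  case True
  have z: "{..<n} = {0::nat}" using True by auto
  have P: "{p. p permutes {..<n}} = {id}" unfolding z by simp
  have "jacobian_det n (cyc_map n) u = partial_deriv (\<lambda>v. cyc_map 1 v 0) u 0"
    unfolding jacobian_det_def det_nat_def P using True by simp
  also have "\<dots> = 1 + (cyc_map 1 u 0)^2" using pd1 assms(2) True by simp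
  finally show ?thesis using True by simp
next
  case False
  then have n2: "n \<ge> 2" using assms(1) by simp
  define A where "A = (\<lambda>i j. partial_deriv (\<lambda>v. cyc_map n v i) u j)"
  define P where "P = {p. p permutes {..<n}}"
  have shp: "sh n permutes {..<n}" and sgn: "sign (sh n) = (-1) ^ (n - 1)"
    using sh_perm_sign[OF assms(1)] by auto
  have bij: "bij_betw (sh n) {..<n} {..<n}" using permutes_imp_bij[OF shp] .
  have shi: "sh n i = Suc i mod n" if "i < n" for i using that by (simp add: sh_def)
  have shne: "sh n i \<noteq> i" if "i < n" for i
  proof (cases "Suc i = n")
    case True
    then show ?thesis using n2 that by (simp add: sh_def)
  next
    case False
    then show ?thesis using that by (simp add: sh_def)
  qed
  have idne: "id \<noteq> sh n" using shne[of 0] n2 by (metis id_apply not_numeral_le_zero not_gr_zero)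
  have finP: "finite P" unfolding P_def by (rule finite_permutations) simp
  have zero: "(\<Prod>i<n. A i (p i)) = 0" if p: "p \<in> P - {id, sh n}" for p
  proof -
    have pp: "p permutes {..<n}" using p P_def by simp
    have "\<not> (\<forall>i<n. p i = i \<or> p i = Suc i mod n)"
      using perm_char[OF n2 pp] p by blast
    then obtain i where i: "i < n" "p i \<noteq> i" "p i \<noteq> sh n i" using shi by auto
    have "p i < n" using permutes_in_image[OF pp] i by simp
    then have "A i (p i) = 0" unfolding A_def using pd[OF n2 i(1) _ assms(2)] i by simp
    then show ?thesis using i(1) by (intro prod_zero) auto
  qed
  have "jacobian_det n (cyc_map n) u = (\<Sum>p\<in>P. of_int (sign p) * (\<Prod>i<n. A i (p i)))"
    unfolding jacobian_det_def det_nat_def A_def P_def by simp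
  also have "\<dots> = (\<Sum>p\<in>{id, sh n}. of_int (sign p) * (\<Prod>i<n. A i (p i)))"
  proof (rule sum.mono_neutral_right)
    show "finite P" by (rule finP)
    show "{id, sh n} \<subseteq> P" using shp by (auto simp: P_def permutes_id)
    show "\<forall>p\<in>P - {id, sh n}. of_int (sign p) * (\<Prod>i<n. A i (p i)) = 0"
    proof
      fix p assume "p \<in> P - {id, sh n}"
      then show "of_int (sign p) * (\<Prod>i<n. A i (p i)) = 0" using zero[of p] by (simp only: mult_zero_right)
    qed
  qed
  also have "\<dots> = (\<Prod>i<n. A i i) + (-1) ^ (n - 1) * (\<Prod>i<n. A i (sh n i))"
    using idne sgn by simp
  finally have J: "jacobian_det n (cyc_map n) u = (\<Prod>i<n. A i i) + (-1) ^ (n - 1) * (\<Prod>i<n. A i (sh n i))" .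
  define S where "S = (\<Prod>i<n. sin (u i))"
  define C where "C = (\<Prod>i<n. cos (u i))"
  have C0: "C \<noteq> 0" unfolding C_def using assms(2) by simp
  have rs: "(\<Prod>i<n. sin (u (sh n i))) = S" unfolding S_def
    using prod.reindex_bij_betw[OF bij, of "\<lambda>i. sin (u i)"] by simp
  have rc: "(\<Prod>i<n. cos (u (sh n i))) = C" unfolding C_def
    using prod.reindex_bij_betw[OF bij, of "\<lambda>i. cos (u i)"] by simp
  have p1: "(\<Prod>i<n. A i i) = 1"
  proof -
    have "(\<Prod>i<n. A i i) = (\<Prod>i<n. cos (u i) / cos (u (sh n i)))"
      unfolding A_def using pd[OF n2 _ _ assms(2)] by (intro prod.cong) auto
    also have "\<dots> = C / C" unfolding prod_dividef rc C_def ..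
    finally show ?thesis using C0 by simp
  qed
  have p2: "(\<Prod>i<n. A i (sh n i)) = (S / C)^2"
  proof -
    have "(\<Prod>i<n. A i (sh n i)) = (\<Prod>i<n. sin (u i) * sin (u (sh n i)) / (cos (u (sh n i)))^2)"
    proof (rule prod.cong)
      fix i assume "i \<in> {..<n}"
      then have i: "i < n" by simp
      have "sh n i < n" using permutes_in_image[OF shp] i by simp
      then show "A i (sh n i) = sin (u i) * sin (u (sh n i)) / (cos (u (sh n i)))^2"
        unfolding A_def using pd[OF n2 i _ assms(2)] shne[OF i] by simp
    qed simp
    also have "\<dots> = (\<Prod>i<n. sin (u i)) * (\<Prod>i<n. sin (u (sh n i))) / (\<Prod>i<n. cos (u (sh n i)))^2"
      by (simp add: prod_dividef prod.distrib prod_power_distrib)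
    also have "\<dots> = S * S / C^2" unfolding rs rc S_def ..
    finally show ?thesis by (simp add: power2_eq_square)
  qed
  have p3: "(\<Prod>i<n. cyc_map n u i) = S / C"
  proof -
    have "(\<Prod>i<n. cyc_map n u i) = (\<Prod>i<n. sin (u i) / cos (u (sh n i)))"
      by (intro prod.cong) (auto simp: cyc_map_def shi)
    also have "\<dots> = S / C" unfolding prod_dividef rc S_def ..
    finally show ?thesis .
  qed
  show ?thesis unfolding J p1 p2 p3 using n2
    by (cases "even n") (auto simp: power_minus1_odd elim!: evenE oddE)
qed

end
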